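(* Let $A,B\in\mathcal{B}$ have nonzero diameters, and let $\varepsilon>0$ satisfy $2\varepsilon<\min\{\operatorname{diam}A,\operatorname{diam}B\}$. Then no $\varepsilon$-shortest curve connecting $A$ and $B$ passes through $\Delta_1$.
   Context: All metric spaces (with finite-valued metrics) are considered up to isometry. $\mathcal{GH}$ denotes the class (in the sense of von Neumann–Bernays–Gödel set theory) of representatives of isometry classes of all metric spaces, and $\mathcal{B}\subset\mathcal{GH}$ the subclass of bounded metric spaces. $d_{GH}$ is the Gromov–Hausdorff distance, with values in $[0,\infty]$: $d_{GH}(X,Y)$ is the infimum of $r$ such that there exist a metric space $Z$ and subsets $X',Y'\subset Z$ isometric to $X,Y$ with Hausdorff distance $d_H(X',Y')\le r$. Topology on the class: for each cardinal $n$, the subclass $\mathcal{GH}_n$ of spaces of cardinality at most $n$ is a set, endowed with the topology whose base consists of the open balls of $d_{GH}$. A map $f$ from a topological space $Z$ to $\mathcal{GH}$ is continuous if it is continuous as a map into $\mathcal{GH}_n$ for some (equivalently, every) cardinal $n$ with $f(Z)\subset\mathcal{GH}_n$. A continuous curve is a continuous map from a segment $[a,b]$. The length $|\gamma|$ of a continuous curve $\gamma\colon[a,b]\to\mathcal{GH}$ is the supremum of $\sum_i d_{GH}(\gamma(t_i),\gamma(t_{i+1}))$ over all partitions $a=t_1<\dots<t_k=b$. An $\varepsilon$-shortest curve connecting $A$ and $B$ is a continuous curve $\gamma$ with $\gamma(a)=A$, $\gamma(b)=B$ and $|\gamma|\le d_{GH}(A,B)+\varepsilon$. $\Delta_1$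 is the single-point metric space. *)

theory Defs
  imports "HOL-Analysis.Analysis"
begin

type_synonym 'a mspace_rep = "'a set \<times> ('a \<Rightarrow> 'a \<Rightarrow> real)"

definition is_mspace :: "'a mspace_rep \<Rightarrow> bool" where
  "is_mspace X \<longleftrightarrow> Metric_space (fst X) (snd X)"

definition bounded_mspace :: "'a mspace_rep \<Rightarrow> bool" where
  "bounded_mspace X \<longleftrightarrow> is_mspace X \<and> (\<exists>C. \<forall>x\<in>fst X. \<forall>y\<in>fst X. snd X x y \<le> C)"

text \<open>Diameter, extended-real valued (the empty space has diameter -infinity).\<close>
definition mdiam :: "'a mspace_rep \<Rightarrow> ereal" where
  "mdiam X = Sup {ereal (snd X x y) | x y. x \<in> fst X \<and> y \<in> fst X}"

definition isom_embed :: "('a \<Rightarrow> 'c) \<Rightarrow> 'a mspace_rep \<Rightarrow> 'c set \<Rightarrow> ('c \<Rightarrow> 'c \<Rightarrow> real) \<Rightarrow> bool" where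
  "isom_embed f X Z dZ \<longleftrightarrow> f ` fst X \<subseteq> Z \<and>
     (\<forall>x\<in>fst X. \<forall>y\<in>fst X. dZ (f x) (f y) = snd X x y)"

definition isometric :: "'a mspace_rep \<Rightarrow> 'b mspace_rep \<Rightarrow> bool" where
  "isometric X Y \<longleftrightarrow> (\<exists>f. bij_betw f (fst X) (fst Y) \<and>
     (\<forall>x\<in>fst X. \<forall>y\<in>fst X. snd Y (f x) (f y) = snd X x y))"

definition hausdist_le :: "('c \<Rightarrow> 'c \<Rightarrow> real) \<Rightarrow> 'c set \<Rightarrow> 'c set \<Rightarrow> real \<Rightarrow> bool" where
  "hausdist_le dZ P Q r \<longleftrightarrow>
     (\<forall>p\<in>P. \<forall>s>r. \<exists>q\<in>Q. dZ p q < s) \<and> (\<forall>q\<in>Q. \<forall>s>r. \<exists>p\<in>P. dZ p q < s)"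

text \<open>Gromov--Hausdorff distance, with values in [0, infinity]. The ambient space Z is taken
  inside the type 'a + 'b (which suffices, since one may always restrict Z to X' \<union> Y').\<close>
definition dGH :: "'a mspace_rep \<Rightarrow> 'b mspace_rep \<Rightarrow> ereal" where
  "dGH X Y = Inf {ereal r | r. 0 \<le> r \<and>
     (\<exists>(Z :: ('a + 'b) set) dZ f g. Metric_space Z dZ \<and> isom_embed f X Z dZ \<and> isom_embed g Y Z dZ
        \<and> hausdist_le dZ (f ` fst X) (g ` fst Y) r)}"

definition Delta1 :: "unit mspace_rep" where
  "Delta1 = ({()}, \<lambda>_ _. 0)"

text \<open>Continuity of a curve [a,b] \<rightarrow> GH for the topology with base the open d_GH-balls
  (unfolded in epsilon-delta form).\<close>
definition GH_continuous_on :: "real \<Rightarrow> real \<Rightarrow> (real \<Rightarrow> 'a mspace_rep) \<Rightarrow> bool" where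
  "GH_continuous_on a b \<gamma> \<longleftrightarrow> (\<forall>t\<in>{a..b}. is_mspace (\<gamma> t)) \<and>
     (\<forall>t\<in>{a..b}. \<forall>e>0. \<exists>\<delta>>0. \<forall>s\<in>{a..b}. \<bar>s - t\<bar> < \<delta> \<longrightarrow> dGH (\<gamma> s) (\<gamma> t) < ereal e)"

definition GH_length :: "real \<Rightarrow> real \<Rightarrow> (real \<Rightarrow> 'a mspace_rep) \<Rightarrow> ereal" where
  "GH_length a b \<gamma> = Sup {(\<Sum>i<k. dGH (\<gamma> (t i)) (\<gamma> (t (Suc i)))) | k t.
      t 0 = a \<and> t k = b \<and> (\<forall>i<k. t i < t (Suc i))}"

definition eps_shortest_curve ::
  "real \<Rightarrow> real \<Rightarrow> real \<Rightarrow> (real \<Rightarrow> 'a mspace_rep) \<Rightarrow> 'b mspace_rep \<Rightarrow> 'c mspace_rep \<Rightarrow> bool" where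
  "eps_shortest_curve \<epsilon> a b \<gamma> A B \<longleftrightarrow> a \<le> b \<and> GH_continuous_on a b \<gamma> \<and>
     isometric (\<gamma> a) A \<and> isometric (\<gamma> b) B \<and> GH_length a b \<gamma> \<le> dGH A B + ereal \<epsilon>"

end

theory Submission
  imports Defs
begin

lemma iso_single:
  assumes "isometric X Delta1" shows "\<exists>p. fst X = {p}"
proof -
  obtain f where f: "bij_betw f (fst X) {()}" using assms unfolding isometric_def Delta1_def by auto
  then have ne: "fst X \<noteq> {}" by (auto simp: bij_betw_def)
  then obtain p where p: "p \<in> fst X" by blast
  have "\<forall>x\<in>fst X. x = p" using f p by (auto simp: bij_betw_def inj_on_def)
  then show ?thesis using p by blast
qed

lemma iso_diam:
  assumes "isometric X Y" shows "mdiam X = mdiam Y"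
proof -
  obtain f where f: "bij_betw f (fst X) (fst Y)"
    and d: "\<forall>x\<in>fst X. \<forall>y\<in>fst X. snd Y (f x) (f y) = snd X x y"
    using assms unfolding isometric_def by auto
  have "{ereal (snd X x y) | x y. x \<in> fst X \<and> y \<in> fst X} = {ereal (snd Y x y) | x y. x \<in> fst Y \<and> y \<in> fst Y}"
  proof (intro equalityI subsetI)
    fix z assume "z \<in> {ereal (snd X x y) | x y. x \<in> fst X \<and> y \<in> fst X}"
    then obtain x y where "z = ereal (snd X x y)" "x \<in> fst X" "y \<in> fst X" by auto
    then show "z \<in> {ereal (snd Y x y) | x y. x \<in> fst Y \<and> y \<in> fst Y}"
      using d f by (auto simp: bij_betw_def) (metis image_eqI)
  next
    fix z assume "z \<in> {ereal (snd Y x y) | x y. x \<in> fst Y \<and> y \<in> fst Y}"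
    then obtain x y where xy: "z = ereal (snd Y x y)" "x \<in> fst Y" "y \<in> fst Y" by auto
    have im: "fst Y = f ` fst X" using f by (simp add: bij_betw_def)
    obtain x' where "x' \<in> fst X" "x = f x'" using xy(2) im by blast
    moreover obtain y' where "y' \<in> fst X" "y = f y'" using xy(3) im by blast
    ultimately show "z \<in> {ereal (snd X x y) | x y. x \<in> fst X \<and> y \<in> fst X}"
      using d xy by auto
  qed
  then show ?thesis unfolding mdiam_def by simp
qed

lemma half_bound:
  fixes v r :: real
  assumes "\<And>s. s > r \<Longrightarrow> v < 2 * s" shows "v \<le> 2 * r"
proof (rule ccontr)
  assume "\<not> v \<le> 2 * r"
  then have "v / 2 > r" by simp
  from assms[OF this] show False by simp
qed

lemma lower1:
  assumes M: "Metric_space Z dZ" and f: "isom_embed f Y Z dZ" and g: "isom_embed g P Z dZ"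
    and P: "fst P = {p}" and H: "hausdist_le dZ (f ` fst Y) (g ` fst P) r"
    and x: "x \<in> fst Y" and y: "y \<in> fst Y"
  shows "snd Y x y \<le> 2 * r"
proof (rule half_bound)
  fix s assume s: "s > r"
  have a: "dZ (f x) (g p) < s" "dZ (f y) (g p) < s" using H s x y P unfolding hausdist_le_def by auto
  have inZ: "f x \<in> Z" "f y \<in> Z" "g p \<in> Z" using f g x y P unfolding isom_embed_def by auto
  have "snd Y x y = dZ (f x) (f y)" using f x y unfolding isom_embed_def by auto
  also have "\<dots> \<le> dZ (f x) (g p) + dZ (g p) (f y)" using Metric_space.triangle[OF M] inZ by blast
  also have "\<dots> = dZ (f x) (g p) + dZ (f y) (g p)" using Metric_space.commute[OF M] by metis
  finally show "snd Y x y < 2 * s" using a by simp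
qed

lemma lower2:
  assumes M: "Metric_space Z dZ" and f: "isom_embed f Y Z dZ" and g: "isom_embed g P Z dZ"
    and P: "fst P = {p}" and H: "hausdist_le dZ (g ` fst P) (f ` fst Y) r"
    and x: "x \<in> fst Y" and y: "y \<in> fst Y"
  shows "snd Y x y \<le> 2 * r"
proof -
  have "hausdist_le dZ (f ` fst Y) (g ` fst P) r"
    using H Metric_space.commute[OF M] unfolding hausdist_le_def by metis
  then show ?thesis using lower1[OF M f g P] x y by blast
qed

lemma dGH_lower1:
  fixes Y :: "'a mspace_rep" and P :: "'b mspace_rep"
  assumes D: "mdiam Y = ereal d" and P: "fst P = {p}"
  shows "ereal (d/2) \<le> dGH Y P"
  unfolding dGH_def
proof (rule Inf_greatest)
  fix z assume "z \<in> {ereal r | r. 0 \<le> r \<and>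
     (\<exists>(Z :: ('a + 'b) set) dZ f g. Metric_space Z dZ \<and> isom_embed f Y Z dZ \<and> isom_embed g P Z dZ
        \<and> hausdist_le dZ (f ` fst Y) (g ` fst P) r)}"
  then obtain r and Z :: "('a+'b) set" and dZ f g where z: "z = ereal r" and M: "Metric_space Z dZ" and f: "isom_embed f Y Z dZ"
    and g: "isom_embed g P Z dZ" and H: "hausdist_le dZ (f ` fst Y) (g ` fst P) r" by auto
  have "mdiam Y \<le> ereal (2*r)" unfolding mdiam_def
    by (rule Sup_least) (auto intro: lower1[OF M f g P H])
  then show "ereal (d/2) \<le> z" using D z by simp
qed

lemma dGH_lower2:
  fixes Y :: "'a mspace_rep" and P :: "'b mspace_rep"
  assumes D: "mdiam Y = ereal d" and P: "fst P = {p}"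
  shows "ereal (d/2) \<le> dGH P Y"
  unfolding dGH_def
proof (rule Inf_greatest)
  fix z assume "z \<in> {ereal r | r. 0 \<le> r \<and>
     (\<exists>(Z :: ('b + 'a) set) dZ f g. Metric_space Z dZ \<and> isom_embed f P Z dZ \<and> isom_embed g Y Z dZ
        \<and> hausdist_le dZ (f ` fst P) (g ` fst Y) r)}"
  then obtain r and Z :: "('b+'a) set" and dZ f g where z: "z = ereal r" and M: "Metric_space Z dZ" and f: "isom_embed f P Z dZ"
    and g: "isom_embed g Y Z dZ" and H: "hausdist_le dZ (f ` fst P) (g ` fst Y) r" by auto
  have "mdiam Y \<le> ereal (2*r)" unfolding mdiam_def
    by (rule Sup_least) (auto intro: lower2[OF M g f P H])
  then show "ereal (d/2) \<le> z" using D z by simp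
qed

lemma diam_real:
  assumes "bounded_mspace A" and "mdiam A \<noteq> 0" and "fst A \<noteq> {}"
  shows "\<exists>d. mdiam A = ereal d \<and> d > 0 \<and> (\<forall>x\<in>fst A. \<forall>y\<in>fst A. snd A x y \<le> d)"
proof -
  obtain C where C: "\<forall>x\<in>fst A. \<forall>y\<in>fst A. snd A x y \<le> C" and M: "Metric_space (fst A) (snd A)"
    using assms(1) unfolding bounded_mspace_def is_mspace_def by blast
  obtain p where p: "p \<in> fst A" using assms(3) by blast
  have up: "mdiam A \<le> ereal C" unfolding mdiam_def using C by (auto intro!: Sup_least)
  have lo: "ereal 0 \<le> mdiam A" unfolding mdiam_def
    using p Metric_space.zero[OF M p p] by (intro Sup_upper2[of "ereal (snd A p p)"]) auto
  then obtain d where d: "mdiam A = ereal d" using up by (cases "mdiam A") auto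
  have "d > 0" using lo d assms(2) by (auto simp: zero_ereal_def)
  moreover have "\<forall>x\<in>fst A. \<forall>y\<in>fst A. snd A x y \<le> d"
  proof (intro ballI)
    fix x y assume "x \<in> fst A" "y \<in> fst A"
    then have "ereal (snd A x y) \<le> mdiam A" unfolding mdiam_def by (intro Sup_upper) auto
    then show "snd A x y \<le> d" using d by simp
  qed
  ultimately show ?thesis using d by blast
qed


definition sumd :: "'b mspace_rep \<Rightarrow> 'c mspace_rep \<Rightarrow> real \<Rightarrow> ('b+'c) \<Rightarrow> ('b+'c) \<Rightarrow> real" where
  "sumd A B m u v = (case (u, v) of (Inl x, Inl y) \<Rightarrow> snd A x y | (Inr x, Inr y) \<Rightarrow> snd B x y | _ \<Rightarrow> m)"

lemma dGH_upper:
  fixes A :: "'b mspace_rep" and B :: "'c mspace_rep"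
  assumes MA: "Metric_space (fst A) (snd A)" and MB: "Metric_space (fst B) (snd B)"
    and dA: "\<forall>x\<in>fst A. \<forall>y\<in>fst A. snd A x y \<le> 2*m"
    and dB: "\<forall>x\<in>fst B. \<forall>y\<in>fst B. snd B x y \<le> 2*m"
    and m: "m > 0" and neA: "fst A \<noteq> {}" and neB: "fst B \<noteq> {}"
  shows "dGH A B \<le> ereal m"
  unfolding dGH_def
proof (rule Inf_lower, intro CollectI exI conjI)
  let ?Z = "Inl ` fst A \<union> Inr ` fst B :: ('b+'c) set"
  let ?d = "sumd A B m"
  show "ereal m = ereal m" "0 \<le> m" using m by auto
  show "Metric_space ?Z ?d"
  proof
    fix x y show "0 \<le> ?d x y" using m Metric_space.nonneg[OF MA] Metric_space.nonneg[OF MB]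
      by (auto simp: sumd_def split: sum.split)
    show "?d x y = ?d y x" using Metric_space.commute[OF MA] Metric_space.commute[OF MB]
      by (auto simp: sumd_def split: sum.split)
  next
    fix x y assume "x \<in> ?Z" "y \<in> ?Z"
    then show "?d x y = 0 \<longleftrightarrow> x = y" using m Metric_space.zero[OF MA] Metric_space.zero[OF MB]
      by (auto simp: sumd_def)
  next
    fix x y z assume "x \<in> ?Z" "y \<in> ?Z" "z \<in> ?Z"
    then show "?d x z \<le> ?d x y + ?d y z"
      using m Metric_space.triangle[OF MA] Metric_space.triangle[OF MB]
        Metric_space.nonneg[OF MA] Metric_space.nonneg[OF MB] dA dB
      by (auto simp: sumd_def)
  qed
  show "isom_embed Inl A ?Z ?d" "isom_embed Inr B ?Z ?d" by (auto simp: isom_embed_def sumd_def)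
  show "hausdist_le ?d (Inl ` fst A) (Inr ` fst B) m"
    using neA neB by (auto simp: hausdist_le_def sumd_def)
qed

lemma length_lower:
  assumes "a < t" "t < b"
  shows "dGH (\<gamma> a) (\<gamma> t) + dGH (\<gamma> t) (\<gamma> b) \<le> GH_length a b \<gamma>"
  unfolding GH_length_def
proof (rule Sup_upper, intro CollectI exI conjI)
  let ?t = "\<lambda>i::nat. if i = 0 then a else if i = 1 then t else b"
  show "dGH (\<gamma> a) (\<gamma> t) + dGH (\<gamma> t) (\<gamma> b) = (\<Sum>i<2. dGH (\<gamma> (?t i)) (\<gamma> (?t (Suc i))))"
    by (simp add: numeral_2_eq_2)
  show "?t 0 = a" "?t 2 = b" by auto
  show "\<forall>i<2. ?t i < ?t (Suc i)" using assms by (auto simp: numeral_2_eq_2 less_Suc_eq)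
qed


lemma single_diam:
  assumes "is_mspace X" "fst X = {p}" shows "mdiam X = 0"
proof -
  have "snd X p p = 0" using assms Metric_space.zero[of "fst X" "snd X" p p] by (auto simp: is_mspace_def)
  then have "{ereal (snd X x y) | x y. x \<in> fst X \<and> y \<in> fst X} = {0}" using assms(2) by auto
  then show ?thesis unfolding mdiam_def by simp
qed

lemma empty_diam: "fst X = {} \<Longrightarrow> mdiam X = -\<infinity>"
  unfolding mdiam_def by (simp add: bot_ereal_def)

theorem lemma5:
  fixes A :: "'b mspace_rep" and B :: "'c mspace_rep" and \<epsilon> :: real
    and \<gamma> :: "real \<Rightarrow> 'a mspace_rep" and a b :: real
  assumes "bounded_mspace A" and "bounded_mspace B"
    and "mdiam A \<noteq> 0" and "mdiam B \<noteq> 0"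
    and "\<epsilon> > 0" and "ereal (2 * \<epsilon>) < min (mdiam A) (mdiam B)"
    and "eps_shortest_curve \<epsilon> a b \<gamma> A B"
  shows "\<not> (\<exists>t\<in>{a..b}. isometric (\<gamma> t) Delta1)"
proof
  assume "\<exists>t\<in>{a..b}. isometric (\<gamma> t) Delta1"
  then obtain t where t: "t \<in> {a..b}" "isometric (\<gamma> t) Delta1" by blast
  obtain p where p: "fst (\<gamma> t) = {p}" using iso_single[OF t(2)] by blast
  have C: "a \<le> b" "GH_continuous_on a b \<gamma>" "isometric (\<gamma> a) A" "isometric (\<gamma> b) B"
    "GH_length a b \<gamma> \<le> dGH A B + ereal \<epsilon>" using assms(7) unfolding eps_shortest_curve_def by auto
  have ms: "is_mspace (\<gamma> t)" using C(2) t(1) unfolding GH_continuous_on_def by auto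
  have neA: "fst A \<noteq> {}" using assms(6) empty_diam[of A] by auto
  have neB: "fst B \<noteq> {}" using assms(6) empty_diam[of B] by auto
  obtain dA where dA: "mdiam A = ereal dA" "dA > 0" "\<forall>x\<in>fst A. \<forall>y\<in>fst A. snd A x y \<le> dA"
    using diam_real[OF assms(1,3) neA] by blast
  obtain dB where dB: "mdiam B = ereal dB" "dB > 0" "\<forall>x\<in>fst B. \<forall>y\<in>fst B. snd B x y \<le> dB"
    using diam_real[OF assms(2,4) neB] by blast
  have ta: "t \<noteq> a"
  proof
    assume "t = a"
    then have "mdiam A = 0" using iso_diam[OF C(3)] single_diam[OF ms p] by simp
    then show False using assms(3) by simp
  qed
  have tb: "t \<noteq> b"
  proof
    assume "t = b"
    then have "mdiam B = 0" using iso_diam[OF C(4)] single_diam[OF ms p] by simp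
    then show False using assms(4) by simp
  qed
  have at: "a < t" "t < b" using t(1) ta tb by auto
  have l1: "ereal (dA/2) \<le> dGH (\<gamma> a) (\<gamma> t)"
    using dGH_lower1[OF _ p] iso_diam[OF C(3)] dA(1) by simp
  have l2: "ereal (dB/2) \<le> dGH (\<gamma> t) (\<gamma> b)"
    using dGH_lower2[OF _ p] iso_diam[OF C(4)] dB(1) by simp
  define m where "m = max dA dB / 2"
  have MA: "Metric_space (fst A) (snd A)" using assms(1) by (simp add: bounded_mspace_def is_mspace_def)
  have MB: "Metric_space (fst B) (snd B)" using assms(2) by (simp add: bounded_mspace_def is_mspace_def)
  have up: "dGH A B \<le> ereal m"
    by (rule dGH_upper[OF MA MB]) (use dA dB neA neB in \<open>auto simp: m_def\<close>, (smt (verit))+)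
  have "ereal (dA/2) + ereal (dB/2) \<le> ereal m + ereal \<epsilon>"
  proof -
    have "ereal (dA/2) + ereal (dB/2) \<le> dGH (\<gamma> a) (\<gamma> t) + dGH (\<gamma> t) (\<gamma> b)"
      using l1 l2 by (rule add_mono)
    also have "\<dots> \<le> GH_length a b \<gamma>" by (rule length_lower[OF at])
    also have "\<dots> \<le> dGH A B + ereal \<epsilon>" by (rule C(5))
    also have "\<dots> \<le> ereal m + ereal \<epsilon>" using up by (rule add_right_mono)
    finally show ?thesis .
  qed
  then have "dA/2 + dB/2 \<le> m + \<epsilon>" by simp
  moreover have "2 * \<epsilon> < min dA dB" using assms(6) dA(1) dB(1) by simp
  ultimately show False unfolding m_def by (auto simp: max_def min_def split: if_splits)
qed

end
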